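(* Let $X$ be a non-negative absolutely continuous random variable with CDF $F$ and PDF $f$ (the common distribution of the identically distributed component lifetimes of a coherent system), and let $T$ be the system lifetime, with CDF $F_T(x)=q(F(x))$ and PDF $f_T(x)=q'(F(x))f(x)$, where $q$ is the distortion function of the system. Let $0<\alpha<\infty$, $\alpha\ne1$, $\beta>0$, and put $\psi_\alpha(u)=f_T^\alpha(F_T^{-1}(u))$ and $\phi_\alpha(u)=f^\alpha(F^{-1}(u))$ for $0\le u\le1$. If $\psi_\alpha(q(u))\ge \phi_\alpha(u)$ for all $0\le u\le 1$, then $R^\alpha_\beta(T)\ge R^\alpha_\beta(X)$ for $\{\alpha>1,\beta\le1\}$ or $\{0<\alpha<1,\beta\ge1\}$, and $R^\alpha_\beta(T)\le R^\alpha_\beta(X)$ for $\{\alpha>1,\beta\ge1\}$ or $\{0<\alpha<1,\beta\le1\}$. If instead $\psi_\alpha(q(u))\le \phi_\alpha(u)$ for all $0\le u\le1$, then all these inequalities between $R^\alpha_\beta(T)$ and $R^\alpha_\beta(X)$ are reversed.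
   Context: For a non-negative absolutely continuous random variable $Z$ with PDF $h$, the Rényi information generating function is $R^\alpha_\beta(Z)=\frac{1}{1-\alpha}\left(\int_0^\infty h^\alpha(x)\,dx\right)^{\beta-1}$; all integrals are assumed finite. A distortion function is a continuous increasing (differentiable) function $q:[0,1]\to[0,1]$ with $q(0)=0$, $q(1)=1$; it depends on the structure of the system and the copula of the component lifetimes. Quantile functions are $F^{-1}(u)=\inf\{x:F(x)\ge u\}$. *)

theory Defs
  imports "HOL-Probability.Probability"
begin

definition quantile :: "(real \<Rightarrow> real) \<Rightarrow> real \<Rightarrow> real" where
  "quantile G u = Inf {x. u \<le> G x}"

definition renyi_igf :: "real \<Rightarrow> real \<Rightarrow> (real \<Rightarrow> real) \<Rightarrow> real" where
  "renyi_igf \<alpha> \<beta> h = (1 / (1 - \<alpha>)) * (LBINT x:{0..}. h x powr \<alpha>) powr (\<beta> - 1)"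

end

theory Submission
  imports Defs
begin


lemma cdf_basic:
  fixes M :: "'a measure" and Y :: "'a \<Rightarrow> real" and g G :: "real \<Rightarrow> real"
  assumes M: "prob_space M"
    and D: "distributed M lborel Y (\<lambda>x. ennreal (g x))"
    and G: "\<forall>x. G x = measure M {\<omega> \<in> space M. Y \<omega> \<le> x}"
  shows "real_distribution (density lborel (\<lambda>x. ennreal (g x)))"
    and "G = cdf (density lborel (\<lambda>x. ennreal (g x)))"
    and "continuous_on UNIV G"
proof -
  let ?N = "density lborel (\<lambda>x. ennreal (g x))"
  have eq: "distr M lborel Y = ?N" using D by (simp add: distributed_distr_eq_density)
  have meas: "Y \<in> measurable M lborel" using distributed_measurable[OF D] .
  have ps: "prob_space (distr M lborel Y)"
    using prob_space.prob_space_distr[OF M meas] .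
  show rd: "real_distribution ?N"
    unfolding real_distribution_def real_distribution_axioms_def
    using ps eq by auto
  show GG: "G = cdf ?N"
  proof
    fix x
    have "cdf ?N x = measure (distr M lborel Y) {..x}" using eq by (simp add: cdf_def)
    also have "\<dots> = measure M (Y -` {..x} \<inter> space M)"
      by (rule measure_distr) (use meas in auto)
    also have "Y -` {..x} \<inter> space M = {\<omega> \<in> space M. Y \<omega> \<le> x}" by auto
    finally show "G x = cdf ?N x" using G by simp
  qed
  have gm: "(\<lambda>x. ennreal (g x)) \<in> borel_measurable lborel"
    using D by (simp add: distributed_borel_measurable)
  have "isCont (cdf ?N) x" for x
  proof -
    have "{x} \<in> null_sets ?N"
      unfolding null_sets_density_iff[OF gm]
    proof
      show "{x} \<in> sets lborel" by simp
      show "AE y in lborel. y \<in> {x} \<longrightarrow> ennreal (g y) = 0"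
        using AE_lborel_singleton[of x] by eventually_elim auto
    qed
    then have "measure ?N {x} = 0" by (simp add: measure_def null_setsD1)
    then show ?thesis using finite_borel_measure.isCont_cdf[OF real_distribution.finite_borel_measure_M[OF rd]] by simp
  qed
  then show "continuous_on UNIV G" using GG by (simp add: continuous_at_imp_continuous_on)
qed



lemma quot_right:
  assumes "(q has_real_derivative D) (at a within {0..1})" "0 \<le> a" "a < 1"
  shows "((\<lambda>y. (q y - q a) / (y - a)) \<longlongrightarrow> D) (at_right a)"
proof -
  have "(q has_real_derivative D) (at a within {a..1})"
    using assms by (auto intro: has_field_derivative_subset)
  then show ?thesis using at_within_Icc_at_right[OF assms(3)]
    by (simp add: has_field_derivative_iff)
qed

lemma quot_left:
  assumes "(q has_real_derivative D) (at b within {0..1})" "0 < b" "b \<le> 1"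
  shows "((\<lambda>y. (q y - q b) / (y - b)) \<longlongrightarrow> D) (at_left b)"
proof -
  have "(q has_real_derivative D) (at b within {0..b})"
    using assms by (auto intro: has_field_derivative_subset)
  then show ?thesis using at_within_Icc_at_left[OF assms(2)]
    by (simp add: has_field_derivative_iff)
qed

lemma deriv_flat_right:
  assumes "(q has_real_derivative D) (at a within {0..1})" "0 \<le> a" "a < b" "b \<le> 1"
    and "\<forall>w\<in>{a..b}. q w = q a"
  shows "D = 0"
proof -
  have "eventually (\<lambda>y. (q y - q a) / (y - a) = 0) (at_right a)"
    unfolding eventually_at_right_field
  proof (intro exI[of _ b] conjI allI impI)
    fix y assume y: "a < y" "y < b"
    then have "y \<in> {a..b}" by auto
    then have "q y = q a" using assms(5) by blast
    then show "(q y - q a) / (y - a) = 0" by simp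
  qed (use assms(3) in auto)
  then have "((\<lambda>y. (q y - q a) / (y - a)) \<longlongrightarrow> 0) (at_right a)"
    by (rule tendsto_eventually)
  moreover have "((\<lambda>y. (q y - q a) / (y - a)) \<longlongrightarrow> D) (at_right a)"
    using quot_right[OF assms(1,2)] assms(3,4) by simp
  ultimately show ?thesis
    using tendsto_unique[of "at_right a"] by (metis trivial_limit_at_right_real)
qed

lemma deriv_flat_left:
  assumes "(q has_real_derivative D) (at b within {0..1})" "0 \<le> a" "a < b" "b \<le> 1"
    and "\<forall>w\<in>{a..b}. q w = q b"
  shows "D = 0"
proof -
  have "eventually (\<lambda>y. (q y - q b) / (y - b) = 0) (at_left b)"
    unfolding eventually_at_left_field
  proof (intro exI[of _ a] conjI allI impI)
    fix y assume y: "a < y" "y < b"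
    then have "y \<in> {a..b}" by auto
    then have "q y = q b" using assms(5) by blast
    then show "(q y - q b) / (y - b) = 0" by simp
  qed (use assms(3) in auto)
  then have "((\<lambda>y. (q y - q b) / (y - b)) \<longlongrightarrow> 0) (at_left b)"
    by (rule tendsto_eventually)
  moreover have "((\<lambda>y. (q y - q b) / (y - b)) \<longlongrightarrow> D) (at_left b)"
    using quot_left[OF assms(1)] assms(2,3,4) by simp
  ultimately show ?thesis
    using tendsto_unique[of "at_left b"] by (metis trivial_limit_at_left_real)
qed

lemma deriv_nonneg:
  assumes "(q has_real_derivative D) (at a within {0..1})" "0 \<le> a" "a \<le> 1"
    and "mono_on {0..1} q"
  shows "0 \<le> D"
proof (cases "a < 1")
  case True
  have "eventually (\<lambda>y. 0 \<le> (q y - q a) / (y - a)) (at_right a)"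
    unfolding eventually_at_right_field using assms True
  proof (intro exI[of _ 1] conjI allI impI)
    fix y assume y: "a < y" "y < 1"
    then have "q a \<le> q y" using assms(4) assms(2) unfolding mono_on_def by auto
    then show "0 \<le> (q y - q a) / (y - a)" using y by simp
  qed (use True in auto)
  then show ?thesis using quot_right[OF assms(1,2) True]
    by (intro tendsto_lowerbound) auto
next
  case False
  then have a1: "a = 1" using assms by auto
  have "eventually (\<lambda>y. 0 \<le> (q y - q a) / (y - a)) (at_left a)"
    unfolding eventually_at_left_field using assms a1
  proof (intro exI[of _ 0] conjI allI impI)
    fix y assume y: "0 < y" "y < a"
    then have "q y \<le> q a" using assms(4) a1 unfolding mono_on_def by auto
    then show "0 \<le> (q y - q a) / (y - a)" using y by (simp add: divide_nonpos_neg)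
  qed (use a1 in auto)
  then show ?thesis using quot_left[OF assms(1) _ assms(3)] a1
    by (intro tendsto_lowerbound) auto
qed



lemma quant_props:
  fixes G :: "real \<Rightarrow> real"
  assumes cont: "continuous_on UNIV G" and lim: "(G \<longlongrightarrow> 0) at_bot"
    and u: "0 < u" and x: "u \<le> G x"
  shows "quantile G u \<le> x" "G (quantile G u) = u"
    "\<And>y. u \<le> G y \<Longrightarrow> quantile G u \<le> y"
proof -
  let ?S = "{y. u \<le> G y}"
  have ne: "?S \<noteq> {}" using x by auto
  have "eventually (\<lambda>y. G y < u) at_bot" using order_tendstoD(2)[OF lim u] .
  then obtain N where N: "\<And>y. y \<le> N \<Longrightarrow> G y < u" unfolding eventually_at_bot_linorder by auto
  have bdd: "bdd_below ?S"
    unfolding bdd_below_def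
  proof (intro exI[of _ N] ballI)
    fix y assume "y \<in> ?S"
    then show "N \<le> y" using N[of y] by (cases "y \<le> N") auto
  qed
  have cl: "closed ?S"
    using closed_Collect_le[OF continuous_on_const cont] .
  have inS: "quantile G u \<in> ?S" unfolding quantile_def
    using closed_contains_Inf[OF ne bdd cl] .
  show low: "\<And>y. u \<le> G y \<Longrightarrow> quantile G u \<le> y"
    unfolding quantile_def using bdd by (intro cInf_lower) auto
  then show "quantile G u \<le> x" using x by blast
  let ?z = "quantile G u"
  have "eventually (\<lambda>y. G y \<le> u) (at_left ?z)"
    unfolding eventually_at_left_field
  proof (intro exI[of _ "?z - 1"] conjI allI impI)
    fix y assume y: "?z - 1 < y" "y < ?z"
    show "G y \<le> u"
    proof (rule ccontr)
      assume "\<not> G y \<le> u"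
      then have "?z \<le> y" using low by auto
      then show False using y by auto
    qed
  qed auto
  moreover have "(G \<longlongrightarrow> G ?z) (at_left ?z)"
    using cont by (meson UNIV_I continuous_on_def filterlim_at_split tendsto_within_subset top_greatest)
  ultimately have "G ?z \<le> u"
    by (intro tendsto_upperbound[of G "G ?z" "at_left ?z" u]) auto
  then show "G ?z = u" using inS by auto
qed



lemma cdf_more:
  fixes N :: "real measure"
  assumes "real_distribution N"
  shows "mono (cdf N)" "(cdf N \<longlongrightarrow> 0) at_bot" "(cdf N \<longlongrightarrow> 1) at_top"
    "\<And>x. 0 \<le> cdf N x" "\<And>x. cdf N x \<le> 1"
    "\<And>a b. a < b \<Longrightarrow> cdf N b - cdf N a = measure N {a<..b}"
proof -
  interpret real_distribution N by fact
  show "mono (cdf N)" by (simp add: cdf_nondecreasing monoI)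
  show "(cdf N \<longlongrightarrow> 0) at_bot" by (rule cdf_lim_at_bot)
  show "(cdf N \<longlongrightarrow> 1) at_top" by (rule cdf_lim_at_top_prob)
  show "\<And>x. 0 \<le> cdf N x" by (rule cdf_nonneg)
  show "\<And>x. cdf N x \<le> 1" by (rule cdf_bounded_prob)
  show "\<And>a b. a < b \<Longrightarrow> cdf N b - cdf N a = measure N {a<..b}" by (rule cdf_diff_eq)
qed

lemma flat_null:
  fixes N :: "real measure"
  assumes rd: "real_distribution N" and cont: "continuous_on UNIV (cdf N)"
  shows "AE x in N. \<not> (r < x \<and> cdf N x = cdf N r)"
proof -
  interpret real_distribution N by fact
  let ?F = "cdf N"
  let ?S = "{x. r < x \<and> ?F x = ?F r}"
  show ?thesis
  proof (cases "?S = {}")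
    case True then show ?thesis by auto
  next
    case False
    show ?thesis
    proof (cases "bdd_above ?S")
      case True
      let ?s = "Sup ?S"
      have "closed {x. ?F x = ?F r}"
        using closed_Collect_eq[OF cont continuous_on_const] .
      moreover have "?s \<in> closure ?S" using closure_contains_Sup[OF False True] .
      moreover have "closure ?S \<subseteq> {x. ?F x = ?F r}"
        by (rule closure_minimal) (auto simp: calculation)
      ultimately have Fs: "?F ?s = ?F r" by auto
      obtain x0 where x0: "x0 \<in> ?S" using False by auto
      have rs: "r < ?s" using x0 True cSup_upper[of x0 ?S] by auto
      have sub: "?S \<subseteq> {r<..?s}" using True by (auto intro: cSup_upper)
      have "measure N {r<..?s} = 0" using cdf_diff_eq[OF rs] Fs by simp
      then have "{r<..?s} \<in> null_sets N"
        by (simp add: emeasure_eq_measure null_setsI)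
      then show ?thesis by (rule AE_I') (use sub in auto)
    next
      case nb: False
      have "eventually (\<lambda>y. ?F y \<le> ?F r) at_top"
        unfolding eventually_at_top_linorder
      proof (intro exI[of _ "r + 1"] allI impI)
        fix y assume y: "r + 1 \<le> y"
        from nb obtain x where x: "x \<in> ?S" "y < x" unfolding bdd_above_def
          by (meson linorder_not_le)
        then show "?F y \<le> ?F r" using cdf_nondecreasing[of y x] by auto
      qed
      then have "1 \<le> ?F r"
        using cdf_lim_at_top_prob by (intro tendsto_upperbound) auto
      then have F1: "?F r = 1" using cdf_bounded_prob[of r] by auto
      have "measure N (space N - {..r}) = 1 - measure N {..r}"
        by (rule prob_compl) auto
      then have "measure N {r<..} = 0" using F1 by (simp add: cdf_def Compl_eq_Diff_UNIV[symmetric] Compl_atMost)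
      then have "{r<..} \<in> null_sets N"
        by (simp add: emeasure_eq_measure null_setsI)
      then show ?thesis by (rule AE_I') auto
    qed
  qed
qed



lemma good_ae_N:
  fixes N :: "real measure"
  assumes rd: "real_distribution N" and cont: "continuous_on UNIV (cdf N)"
  shows "AE x in N. quantile (cdf N) (cdf N x) = x"
proof -
  let ?F = "cdf N"
  note cm = cdf_more[OF rd]
  have "AE x in N. \<forall>r::rat. \<not> (real_of_rat r < x \<and> ?F x = ?F (real_of_rat r))"
    unfolding AE_all_countable using flat_null[OF rd cont] by blast
  then show ?thesis
  proof eventually_elim
    case (elim x)
    have nof: "\<not> (r < x \<and> ?F r = ?F x)" if "r \<in> \<rat>" for r
      using elim that by (metis Rats_cases)
    have u0: "0 < ?F x"
    proof (rule ccontr)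
      assume "\<not> 0 < ?F x"
      then have F0: "?F x = 0" using cm(4)[of x] by auto
      obtain r where r: "r \<in> \<rat>" "x - 1 < r" "r < x" using Rats_dense_in_real[of "x - 1" x] by auto
      have "?F r \<le> ?F x" using cm(1) r by (simp add: monoD)
      then have "?F r = ?F x" using F0 cm(4)[of r] by auto
      then show False using nof[OF r(1)] r by auto
    qed
    note qp = quant_props[OF cont cm(2) u0 order_refl]
    show ?case
    proof (rule ccontr)
      assume ne: "quantile ?F (?F x) \<noteq> x"
      then have lt: "quantile ?F (?F x) < x" using qp(1) by auto
      obtain r where r: "r \<in> \<rat>" "quantile ?F (?F x) < r" "r < x"
        using Rats_dense_in_real[OF lt] by auto
      have "?F (quantile ?F (?F x)) \<le> ?F r" "?F r \<le> ?F x" using cm(1) r by (auto simp add: monoD)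
      then have "?F r = ?F x" using qp(2) by auto
      then show False using nof[OF r(1)] r by auto
    qed
  qed
qed

lemma good_ae:
  fixes M :: "'a measure" and Y :: "'a \<Rightarrow> real" and g G :: "real \<Rightarrow> real"
  assumes M: "prob_space M"
    and D: "distributed M lborel Y (\<lambda>x. ennreal (g x))"
    and G: "\<forall>x. G x = measure M {\<omega> \<in> space M. Y \<omega> \<le> x}"
  shows "AE x in lborel. 0 < g x \<longrightarrow> quantile G (G x) = x"
proof -
  let ?N = "density lborel (\<lambda>x. ennreal (g x))"
  note cb = cdf_basic[OF M D G]
  have gm: "(\<lambda>x. ennreal (g x)) \<in> borel_measurable lborel"
    using D by (simp add: distributed_borel_measurable)
  have "AE x in ?N. quantile G (G x) = x"
    using good_ae_N[OF cb(1)] cb(2,3) by simp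
  then have "AE x in lborel. 0 < ennreal (g x) \<longrightarrow> quantile G (G x) = x"
    using AE_density[OF gm] by simp
  then show ?thesis by eventually_elim simp
qed



lemma lemZ:
  fixes F q :: "real \<Rightarrow> real"
  assumes Fc: "continuous_on UNIV F" and Fl: "(F \<longlongrightarrow> 0) at_bot" and Fm: "mono F"
    and Fr: "\<And>x. 0 \<le> F x \<and> F x \<le> 1"
    and FTc: "continuous_on UNIV (\<lambda>y. q (F y))" and FTl: "((\<lambda>y. q (F y)) \<longlongrightarrow> 0) at_bot"
    and q_mono: "mono_on {0..1} q" and q0: "q 0 = 0"
    and good: "quantile F (F x) = x" and pos: "0 < q (F x)"
  shows "quantile (\<lambda>y. q (F y)) (q (F x)) = x \<or>
    (F (quantile (\<lambda>y. q (F y)) (q (F x))) < F x \<and>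
     (\<forall>w\<in>{F (quantile (\<lambda>y. q (F y)) (q (F x)))..F x}. q w = q (F x)))"
proof -
  let ?z = "quantile (\<lambda>y. q (F y)) (q (F x))"
  note qp = quant_props[OF FTc FTl pos order_refl]
  have Fx0: "0 < F x" using pos q0 Fr[of x] by (cases "F x = 0") auto
  note qpF = quant_props[OF Fc Fl Fx0 order_refl]
  show ?thesis
  proof (cases "?z = x")
    case True then show ?thesis by simp
  next
    case False
    then have zx: "?z < x" using qp(1) by auto
    then have "F ?z \<le> F x" using Fm by (simp add: monoD)
    moreover have "F ?z \<noteq> F x"
    proof
      assume "F ?z = F x"
      then have "quantile F (F x) \<le> ?z" using qpF(3)[of ?z] by simp
      then show False using good zx by simp
    qed
    ultimately have lt: "F ?z < F x" by simp
    have "\<forall>w\<in>{F ?z..F x}. q w = q (F x)"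
    proof
      fix w assume w: "w \<in> {F ?z..F x}"
      have w01: "w \<in> {0..1}" using w Fr[of ?z] Fr[of x] by auto
      have a1: "F ?z \<in> {0..1}" "F x \<in> {0..1}" using Fr[of ?z] Fr[of x] by auto
      have "q (F ?z) \<le> q w" using mono_onD[OF q_mono a1(1) w01] w by auto
      moreover have "q w \<le> q (F x)" using mono_onD[OF q_mono w01 a1(2)] w by auto
      ultimately show "q w = q (F x)" using qp(2) by simp
    qed
    then show ?thesis using lt by blast
  qed
qed

lemma quantile_zero: "quantile G 0 = Inf UNIV" if "\<And>y. 0 \<le> G y"
proof -
  have "{y. 0 \<le> G y} = UNIV" using that by auto
  then show ?thesis unfolding quantile_def by simp
qed



lemma ge_point:
  fixes F q q' f :: "real \<Rightarrow> real"
  assumes Fc: "continuous_on UNIV F" and Fl: "(F \<longlongrightarrow> 0) at_bot" and Fm: "mono F"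
    and Fr: "\<And>x. 0 \<le> F x \<and> F x \<le> 1"
    and FTc: "continuous_on UNIV (\<lambda>y. q (F y))" and FTl: "((\<lambda>y. q (F y)) \<longlongrightarrow> 0) at_bot"
    and q_mono: "mono_on {0..1} q" and q0: "q 0 = 0" and q_range: "q ` {0..1} \<subseteq> {0..1}"
    and q_deriv: "\<forall>u\<in>{0..1}. (q has_real_derivative q' u) (at u within {0..1})"
    and hyp: "\<forall>u\<in>{0..1}. (\<lambda>x. q' (F x) * f x) (quantile (\<lambda>y. q (F y)) (q u)) powr \<alpha> \<ge> f (quantile F u) powr \<alpha>"
    and \<alpha>: "0 < \<alpha>"
    and good: "quantile F (F x) = x" and fpos: "0 < f x" and cas: "F x = 0 \<or> 0 < q (F x)"
  shows "f x powr \<alpha> \<le> (q' (F x) * f x) powr \<alpha>"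
proof -
  have F01: "F x \<in> {0..1}" using Fr[of x] by auto
  have qFnn: "0 \<le> q (F y)" for y
  proof -
    have "F y \<in> {0..1}" using Fr[of y] by auto
    then have "q (F y) \<in> {0..1}" using q_range by blast
    then show ?thesis by auto
  qed
  from cas show ?thesis
  proof
    assume F0: "F x = 0"
    have "quantile (\<lambda>y. q (F y)) (q 0) = Inf UNIV" using q0 qFnn by (simp add: quantile_zero)
    moreover have "quantile F 0 = Inf UNIV" using Fr by (simp add: quantile_zero)
    ultimately have "quantile (\<lambda>y. q (F y)) (q 0) = x" "quantile F 0 = x" using good F0 by auto
    then show ?thesis using hyp F0 by force
  next
    assume qpos: "0 < q (F x)"
    let ?z = "quantile (\<lambda>y. q (F y)) (q (F x))"
    have hx: "f x powr \<alpha> \<le> (q' (F ?z) * f ?z) powr \<alpha>" using hyp F01 good by force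
    have "?z = x"
    proof (rule ccontr)
      assume ne: "?z \<noteq> x"
      then have lt: "F ?z < F x" and fl: "\<forall>w\<in>{F ?z..F x}. q w = q (F x)"
        using lemZ[OF Fc Fl Fm Fr FTc FTl q_mono q0 good qpos] by blast+
      have a01: "F ?z \<in> {0..1}" using Fr[of ?z] by auto
      have "F ?z \<in> {F ?z..F x}" using lt by auto
      then have "q (F ?z) = q (F x)" using fl by blast
      then have fl2: "\<forall>w\<in>{F ?z..F x}. q w = q (F ?z)" using fl by metis
      have "q' (F ?z) = 0"
        using deriv_flat_right[OF q_deriv[rule_format, OF a01] _ lt _ fl2] Fr[of ?z] Fr[of x] by auto
      then have "f x powr \<alpha> \<le> 0" using hx by simp
      moreover have "0 < f x powr \<alpha>" using fpos by simp
      ultimately show False by simp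
    qed
    then show ?thesis using hx by simp
  qed
qed

lemma le_point:
  fixes F q q' f :: "real \<Rightarrow> real"
  assumes Fc: "continuous_on UNIV F" and Fl: "(F \<longlongrightarrow> 0) at_bot" and Fm: "mono F"
    and Fr: "\<And>x. 0 \<le> F x \<and> F x \<le> 1"
    and FTc: "continuous_on UNIV (\<lambda>y. q (F y))" and FTl: "((\<lambda>y. q (F y)) \<longlongrightarrow> 0) at_bot"
    and q_mono: "mono_on {0..1} q" and q0: "q 0 = 0" and q_range: "q ` {0..1} \<subseteq> {0..1}"
    and q_deriv: "\<forall>u\<in>{0..1}. (q has_real_derivative q' u) (at u within {0..1})"
    and hyp: "\<forall>u\<in>{0..1}. (\<lambda>x. q' (F x) * f x) (quantile (\<lambda>y. q (F y)) (q u)) powr \<alpha> \<le> f (quantile F u) powr \<alpha>"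
    and good: "quantile F (F x) = x" and dpos: "q' (F x) \<noteq> 0"
  shows "(q' (F x) * f x) powr \<alpha> \<le> f x powr \<alpha>"
proof -
  have F01: "F x \<in> {0..1}" using Fr[of x] by auto
  have qFnn: "0 \<le> q (F y)" for y
  proof -
    have "F y \<in> {0..1}" using Fr[of y] by auto
    then have "q (F y) \<in> {0..1}" using q_range by blast
    then show ?thesis by auto
  qed
  consider "F x = 0" | "0 < F x \<and> q (F x) = 0" | "0 < q (F x)" using qFnn[of x] F01 by force
  then show ?thesis
  proof cases
    case 1
    have "quantile (\<lambda>y. q (F y)) (q 0) = Inf UNIV" using q0 qFnn by (simp add: quantile_zero)
    moreover have "quantile F 0 = Inf UNIV" using Fr by (simp add: quantile_zero)
    ultimately have "quantile (\<lambda>y. q (F y)) (q 0) = x" "quantile F 0 = x" using good 1 by auto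
    then show ?thesis using hyp 1 by force
  next
    case 2
    have fl: "\<forall>w\<in>{0..F x}. q w = q (F x)"
    proof
      fix w assume w: "w \<in> {0..F x}"
      then have "w \<in> {0..1}" using F01 by auto
      then have w01: "w \<in> {0..1}" .
      have "q w \<le> q (F x)" using mono_onD[OF q_mono w01 F01] w by auto
      moreover have "q w \<in> {0..1}" using q_range w01 by blast
      ultimately have "q w \<le> q (F x)" "0 \<le> q w" by auto
      then show "q w = q (F x)" using 2 by auto
    qed
    have "q' (F x) = 0"
      using deriv_flat_left[OF q_deriv[rule_format, OF F01] _ _ _ fl] 2 F01 by auto
    then show ?thesis using dpos by simp
  next
    case 3
    let ?z = "quantile (\<lambda>y. q (F y)) (q (F x))"
    have hx: "(q' (F ?z) * f ?z) powr \<alpha> \<le> f x powr \<alpha>" using hyp F01 good by force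
    have "?z = x"
    proof (rule ccontr)
      assume ne: "?z \<noteq> x"
      then have lt: "F ?z < F x" and fl: "\<forall>w\<in>{F ?z..F x}. q w = q (F x)"
        using lemZ[OF Fc Fl Fm Fr FTc FTl q_mono q0 good 3] by blast+
      have "q' (F x) = 0"
        using deriv_flat_left[OF q_deriv[rule_format, OF F01] _ lt _ fl] Fr[of ?z] Fr[of x] by auto
      then show False using dpos by simp
    qed
    then show ?thesis using hx by simp
  qed
qed



lemma deriv_contra:
  fixes q q' :: "real \<Rightarrow> real"
  assumes q_cont: "continuous_on {0..1} q" and q_mono: "mono_on {0..1} q"
    and q_range: "q ` {0..1} \<subseteq> {0..1}"
    and q_deriv: "\<forall>u\<in>{0..1}. (q has_real_derivative q' u) (at u within {0..1})"
    and b: "0 < b" "b < 1" "q b = 0"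
    and ineq: "\<And>v' v. b < v' \<Longrightarrow> v' < v \<Longrightarrow> v < 1 \<Longrightarrow> v - v' \<le> q v - q v'"
  shows False
proof -
  have b01: "b \<in> {0..1}" using b by auto
  have qlim: "(q \<longlongrightarrow> q b) (at_right b)"
  proof -
    have "(q \<longlongrightarrow> q b) (at b within {0..1})"
      using q_cont b01 by (simp add: continuous_on_def)
    then have "(q \<longlongrightarrow> q b) (at b within {b..1})"
      by (rule tendsto_within_subset) (use b in auto)
    then show ?thesis using at_within_Icc_at_right[OF b(2)] by simp
  qed
  have ge: "v - b \<le> q v" if v: "b < v" "v < 1" for v
  proof -
    have "((\<lambda>v'. q v - q v' - (v - v')) \<longlongrightarrow> q v - q b - (v - b)) (at_right b)"
      by (intro tendsto_intros qlim)
    moreover have "eventually (\<lambda>v'. 0 \<le> q v - q v' - (v - v')) (at_right b)"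
      unfolding eventually_at_right_field
    proof (intro exI[of _ v] conjI allI impI)
      fix v' assume "b < v'" "v' < v"
      then show "0 \<le> q v - q v' - (v - v')" using ineq[of v' v] v by auto
    qed (use v in auto)
    ultimately have "0 \<le> q v - q b - (v - b)"
      by (intro tendsto_lowerbound) auto
    then show ?thesis using b by simp
  qed
  have "1 \<le> q' b"
  proof -
    have "eventually (\<lambda>y. 1 \<le> (q y - q b) / (y - b)) (at_right b)"
      unfolding eventually_at_right_field
    proof (intro exI[of _ 1] conjI allI impI)
      fix y assume y: "b < y" "y < 1"
      then show "1 \<le> (q y - q b) / (y - b)" using ge[OF y] b by simp
    qed (use b in auto)
    then show ?thesis using quot_right[OF q_deriv[rule_format, OF b01] _ b(2)] b
      by (intro tendsto_lowerbound) auto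
  qed
  moreover have "q' b = 0"
  proof (rule deriv_flat_left[OF q_deriv[rule_format, OF b01], of 0])
    show "\<forall>w\<in>{0..b}. q w = q b"
    proof
      fix w assume w: "w \<in> {0..b}"
      then have w01: "w \<in> {0..1}" using b by auto
      have "q w \<le> q b" using mono_onD[OF q_mono w01 b01] w by auto
      moreover have "q w \<in> {0..1}" using q_range w01 by blast
      ultimately show "q w = q b" using b by auto
    qed
  qed (use b in auto)
  ultimately show False by simp
qed



lemma Bzero:
  fixes NX NT :: "real measure" and f q q' F :: "real \<Rightarrow> real"
  assumes rdX: "real_distribution NX" and rdT: "real_distribution NT"
    and NX: "NX = density lborel (\<lambda>x. ennreal (f x))"
    and NT: "NT = density lborel (\<lambda>x. ennreal (q' (F x) * f x))"
    and fm: "(\<lambda>x. ennreal (f x)) \<in> borel_measurable lborel"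
    and fTm: "(\<lambda>x. ennreal (q' (F x) * f x)) \<in> borel_measurable lborel"
    and F: "F = cdf NX" and FT: "cdf NT = (\<lambda>x. q (F x))"
    and Fc: "continuous_on UNIV F" and FTc: "continuous_on UNIV (\<lambda>y. q (F y))"
    and f_nonneg: "\<forall>x. 0 \<le> f x"
    and q_range: "q ` {0..1} \<subseteq> {0..1}"
    and q_cont: "continuous_on {0..1} q"
    and q_mono: "mono_on {0..1} q"
    and q0: "q 0 = 0" and q1: "q 1 = 1"
    and q_deriv: "\<forall>u\<in>{0..1}. (q has_real_derivative q' u) (at u within {0..1})"
    and hyp: "\<forall>u\<in>{0..1}. (\<lambda>x. q' (F x) * f x) (quantile (\<lambda>y. q (F y)) (q u)) powr \<alpha> \<ge> f (quantile F u) powr \<alpha>"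
    and \<alpha>: "0 < \<alpha>"
    and goodAE: "AE x in lborel. 0 < f x \<longrightarrow> quantile F (F x) = x"
  shows "\<forall>u\<in>{0<..1}. 0 < q u"
proof (rule ccontr)
  assume "\<not> (\<forall>u\<in>{0<..1}. 0 < q u)"
  then obtain u0 where u0: "0 < u0" "u0 \<le> 1" "\<not> 0 < q u0" by auto
  have qnn: "0 \<le> q u" if "u \<in> {0..1}" for u
  proof -
    have "q u \<in> {0..1}" using q_range that by blast
    then show ?thesis by simp
  qed
  have qu0: "q u0 = 0" using qnn[of u0] u0 by auto
  note cX = cdf_more[OF rdX] and cT = cdf_more[OF rdT]
  have Fm: "mono F" using cX(1) F by simp
  have Fl: "(F \<longlongrightarrow> 0) at_bot" using cX(2) F by simp
  have Ft: "(F \<longlongrightarrow> 1) at_top" using cX(3) F by simp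
  have Fr: "\<And>x. 0 \<le> F x \<and> F x \<le> 1" using cX(4,5) F by simp
  have FTl: "((\<lambda>y. q (F y)) \<longlongrightarrow> 0) at_bot" using cT(2) FT by simp
  have qd': "0 \<le> q' u" if "u \<in> {0..1}" for u
    using deriv_nonneg[OF q_deriv[rule_format, OF that] _ _ q_mono] that by auto
  have fTnn: "0 \<le> q' (F x) * f x" for x using qd'[of "F x"] Fr[of x] f_nonneg by auto
  define Z where "Z = {u \<in> {0..1}. q u = 0}"
  have Zcl: "closed Z" unfolding Z_def
    by (rule continuous_closed_preimage_constant[OF q_cont]) simp
  have Zne: "Z \<noteq> {}" using u0 qu0 unfolding Z_def by auto
  have Zbdd: "bdd_above Z" unfolding Z_def bdd_above_def by auto
  define b where "b = Sup Z"
  have bZ: "b \<in> Z" unfolding b_def using closed_contains_Sup[OF Zne Zbdd Zcl] .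
  have "u0 \<in> Z" using u0 qu0 unfolding Z_def by auto
  then have bu0: "u0 \<le> b" unfolding b_def using Zbdd by (rule cSup_upper)
  have qb: "q b = 0" and b1: "b \<le> 1" using bZ unfolding Z_def by auto
  have bne1: "b \<noteq> 1" using qb q1 by auto
  have qpos: "0 < q v" if "b < v" "v \<le> 1" for v
  proof -
    have "v \<notin> Z" using that cSup_upper[OF _ Zbdd, of v] unfolding b_def by auto
    then show ?thesis using qnn[of v] that bu0 u0 unfolding Z_def by auto
  qed
  have ineq: "v - v' \<le> q v - q v'" if vv: "b < v'" "v' < v" "v < 1" for v' v
  proof -
    have "eventually (\<lambda>y. v < F y) at_top" using order_tendstoD(1)[OF Ft vv(3)] .
    then obtain xv where xv: "v \<le> F xv"
      unfolding eventually_at_top_linorder by (meson less_eq_real_def order_refl)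
    have v'0: "0 < v'" using vv bu0 u0 by auto
    have v0: "0 < v" using vv bu0 u0 by auto
    let ?x = "quantile F v'" and ?y = "quantile F v"
    have Fx: "F ?x = v'" using quant_props(2)[OF Fc Fl v'0, of xv] xv vv by auto
    have Fy: "F ?y = v" using quant_props(2)[OF Fc Fl v0 xv] .
    have xy: "?x < ?y"
    proof (rule ccontr)
      assume "\<not> ?x < ?y"
      then have "F ?y \<le> F ?x" using Fm by (simp add: monoD)
      then show False using Fx Fy vv by simp
    qed
    have ae: "AE x in lborel. ennreal (f x) * indicator {?x<..?y} x
                 \<le> ennreal (q' (F x) * f x) * indicator {?x<..?y} x"
      using goodAE
    proof eventually_elim
      case (elim x)
      show ?case
      proof (cases "x \<in> {?x<..?y} \<and> 0 < f x")
        case True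
        then have gx: "quantile F (F x) = x" using elim by auto
        have "F ?x \<le> F x" using Fm True by (auto intro: monoD)
        then have "v' \<le> F x" using Fx by simp
        then have "0 < q (F x)" using qpos[of "F x"] Fr[of x] vv by auto
        then have pw: "f x powr \<alpha> \<le> (q' (F x) * f x) powr \<alpha>"
          using ge_point[OF Fc Fl Fm Fr FTc FTl q_mono q0 q_range q_deriv hyp \<alpha> gx] True by auto
        have "f x \<le> q' (F x) * f x"
        proof (rule ccontr)
          assume "\<not> f x \<le> q' (F x) * f x"
          then have "(q' (F x) * f x) powr \<alpha> < f x powr \<alpha>"
            using powr_less_mono2[OF \<alpha> fTnn[of x]] by auto
          then show False using pw by simp
        qed
        then show ?thesis using True by (simp add: indicator_def)
      next
        case False
        then show ?thesis using f_nonneg[rule_format, of x] by (auto simp: indicator_def)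
      qed
    qed
    have "emeasure NX {?x<..?y} \<le> emeasure NT {?x<..?y}"
      unfolding NX NT using emeasure_density[OF fm] emeasure_density[OF fTm] nn_integral_mono_AE[OF ae]
      by simp
    moreover have "emeasure NX {?x<..?y} = ennreal (v - v')"
      using cX(6)[OF xy] Fx Fy F by (simp add: finite_measure.emeasure_eq_measure[OF finite_borel_measure.axioms(1)[OF real_distribution.finite_borel_measure_M[OF rdX]]])
    moreover have "emeasure NT {?x<..?y} = ennreal (q v - q v')"
      using cT(6)[OF xy] Fx Fy FT by (simp add: finite_measure.emeasure_eq_measure[OF finite_borel_measure.axioms(1)[OF real_distribution.finite_borel_measure_M[OF rdT]]])
    moreover have "0 \<le> q v - q v'"
      using mono_onD[OF q_mono, of v' v] vv bu0 u0 by auto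
    ultimately show ?thesis by simp
  qed
  show False
    using deriv_contra[OF q_cont q_mono q_range q_deriv _ _ qb ineq] bu0 u0 b1 bne1 by auto
qed



lemma F_zero:
  fixes M :: "'a measure" and X :: "'a \<Rightarrow> real" and F :: "real \<Rightarrow> real"
  assumes M: "prob_space M" and Xm: "X \<in> borel_measurable M"
    and Xn: "AE \<omega> in M. 0 \<le> X \<omega>"
    and F_cdf: "\<forall>x. F x = measure M {\<omega> \<in> space M. X \<omega> \<le> x}"
    and Fc: "continuous_on UNIV F"
  shows "F 0 = 0"
proof -
  have neg: "F x = 0" if x: "x < 0" for x
  proof -
    have S: "{\<omega> \<in> space M. X \<omega> \<le> x} \<in> sets M" using Xm by measurable
    have "AE \<omega> in M. \<omega> \<notin> {\<omega> \<in> space M. X \<omega> \<le> x}"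
      using Xn by eventually_elim (use x in auto)
    then have "measure M {\<omega> \<in> space M. X \<omega> \<le> x} = 0"
      using prob_space.prob_eq_0[OF M S] by simp
    then show ?thesis using F_cdf by simp
  qed
  have "(F \<longlongrightarrow> F 0) (at_left 0)"
    using Fc by (meson UNIV_I continuous_on_def filterlim_at_split tendsto_within_subset top_greatest)
  moreover have "(F \<longlongrightarrow> 0) (at_left 0)"
  proof (rule tendsto_eventually)
    show "eventually (\<lambda>y. F y = 0) (at_left (0::real))"
      unfolding eventually_at_left_field
      by (intro exI[of _ "-1"]) (auto intro: neg)
  qed
  ultimately show ?thesis
    using tendsto_unique[of "at_left (0::real)"] by (metis trivial_limit_at_left_real)
qed

lemma pos_int:
  fixes g :: "real \<Rightarrow> real"
  assumes rd: "real_distribution (density lborel (\<lambda>x. ennreal (g x)))"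
    and gm: "(\<lambda>x. ennreal (g x)) \<in> borel_measurable lborel"
    and c0: "cdf (density lborel (\<lambda>x. ennreal (g x))) 0 = 0"
    and int: "set_integrable lborel {0..} (\<lambda>x. g x powr \<alpha>)"
  shows "0 < (LBINT x:{0..}. g x powr \<alpha>)"
proof (rule ccontr)
  let ?N = "density lborel (\<lambda>x. ennreal (g x))"
  interpret real_distribution ?N by fact
  assume "\<not> 0 < (LBINT x:{0..}. g x powr \<alpha>)"
  moreover have "0 \<le> (LBINT x:{0..}. g x powr \<alpha>)"
    unfolding set_lebesgue_integral_def
    by (intro integral_nonneg_AE) (auto simp: indicator_def)
  ultimately have "(LBINT x:{0..}. g x powr \<alpha>) = 0" by simp
  then have "integral\<^sup>L lborel (\<lambda>x. indicator {0..} x *\<^sub>R g x powr \<alpha>) = 0"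
    by (simp add: set_lebesgue_integral_def)
  then have "AE x in lborel. indicator {0..} x *\<^sub>R g x powr \<alpha> = 0"
    using integral_nonneg_eq_0_iff_AE[of lborel "\<lambda>x. indicator {0..} x *\<^sub>R g x powr \<alpha>"] int
    unfolding set_integrable_def by (simp add: indicator_def)
  then have ae: "AE x in lborel. ennreal (g x) * indicator {0..} x = 0"
    by eventually_elim (auto simp: indicator_def)
  have "emeasure ?N {0..} = (\<integral>\<^sup>+x. ennreal (g x) * indicator {0..} x \<partial>lborel)"
    by (rule emeasure_density[OF gm]) simp
  also have "\<dots> = 0" using nn_integral_cong_AE[OF ae] by simp
  finally have e0: "emeasure ?N {0..} = 0" .
  have "measure ?N (space ?N - {..<0}) = 1 - measure ?N {..<0}"
    by (rule prob_compl) auto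
  moreover have "measure ?N {..<0} \<le> measure ?N {..0}"
    by (rule finite_measure_mono) auto
  moreover have "measure ?N {..0} = 0" using c0 by (simp add: cdf_def)
  moreover have "space ?N - {..<0} = {0..}" by auto
  ultimately have "measure ?N {0..} = 1" using measure_nonneg[of ?N "{..<0}"] by simp
  then show False using e0 by (simp add: emeasure_eq_measure)
qed

lemma alg:
  fixes A B \<alpha> \<beta> :: real
  assumes A: "0 < A" "A \<le> B" and \<alpha>: "0 < \<alpha>" "\<alpha> \<noteq> 1" and \<beta>: "0 < \<beta>"
  shows "((\<alpha> > 1 \<and> \<beta> \<le> 1) \<or> (\<alpha> < 1 \<and> \<beta> \<ge> 1)) \<longrightarrow>
           (1 / (1 - \<alpha>)) * A powr (\<beta> - 1) \<le> (1 / (1 - \<alpha>)) * B powr (\<beta> - 1)"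
    and "((\<alpha> > 1 \<and> \<beta> \<ge> 1) \<or> (\<alpha> < 1 \<and> \<beta> \<le> 1)) \<longrightarrow>
           (1 / (1 - \<alpha>)) * B powr (\<beta> - 1) \<le> (1 / (1 - \<alpha>)) * A powr (\<beta> - 1)"
proof -
  have up: "A powr (\<beta> - 1) \<le> B powr (\<beta> - 1)" if "\<beta> \<ge> 1"
    using powr_mono2[of "\<beta> - 1" A B] A that by auto
  have down: "B powr (\<beta> - 1) \<le> A powr (\<beta> - 1)" if "\<beta> \<le> 1"
    using powr_mono2'[of "\<beta> - 1" A B] A that by auto
  define c where "c = 1 / (1 - \<alpha>)"
  have cneg: "c \<le> 0" if "\<alpha> > 1" using that unfolding c_def by simp
  have cpos: "0 \<le> c" if "\<alpha> < 1" using that unfolding c_def by simp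
  have r1: "c * A powr (\<beta> - 1) \<le> c * B powr (\<beta> - 1)" if "(\<alpha> > 1 \<and> \<beta> \<le> 1) \<or> (\<alpha> < 1 \<and> \<beta> \<ge> 1)"
    using that
  proof
    assume h: "\<alpha> > 1 \<and> \<beta> \<le> 1"
    show ?thesis by (rule mult_left_mono_neg[OF down cneg]) (use h in auto)
  next
    assume h: "\<alpha> < 1 \<and> \<beta> \<ge> 1"
    show ?thesis by (rule mult_left_mono[OF up cpos]) (use h in auto)
  qed
  have r2: "c * B powr (\<beta> - 1) \<le> c * A powr (\<beta> - 1)" if "(\<alpha> > 1 \<and> \<beta> \<ge> 1) \<or> (\<alpha> < 1 \<and> \<beta> \<le> 1)"
    using that
  proof
    assume h: "\<alpha> > 1 \<and> \<beta> \<ge> 1"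
    show ?thesis by (rule mult_left_mono_neg[OF up cneg]) (use h in auto)
  next
    assume h: "\<alpha> < 1 \<and> \<beta> \<le> 1"
    show ?thesis by (rule mult_left_mono[OF down cpos]) (use h in auto)
  qed
  show "((\<alpha> > 1 \<and> \<beta> \<le> 1) \<or> (\<alpha> < 1 \<and> \<beta> \<ge> 1)) \<longrightarrow>
           (1 / (1 - \<alpha>)) * A powr (\<beta> - 1) \<le> (1 / (1 - \<alpha>)) * B powr (\<beta> - 1)"
    using r1 unfolding c_def by blast
  show "((\<alpha> > 1 \<and> \<beta> \<ge> 1) \<or> (\<alpha> < 1 \<and> \<beta> \<le> 1)) \<longrightarrow>
           (1 / (1 - \<alpha>)) * B powr (\<beta> - 1) \<le> (1 / (1 - \<alpha>)) * A powr (\<beta> - 1)"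
    using r2 unfolding c_def by blast
qed



theorem proposition6p1:
  fixes M :: "'a measure" and X T :: "'a \<Rightarrow> real"
    and f F fT FT q q' :: "real \<Rightarrow> real" and \<alpha> \<beta> :: real
  assumes M: "prob_space M"
    and X_distr: "distributed M lborel X (\<lambda>x. ennreal (f x))"
    and f_nonneg: "\<forall>x. 0 \<le> f x"
    and X_nonneg: "AE \<omega> in M. 0 \<le> X \<omega>"
    and F_cdf: "\<forall>x. F x = measure M {\<omega> \<in> space M. X \<omega> \<le> x}"
    and q_range: "q ` {0..1} \<subseteq> {0..1}"
    and q_cont: "continuous_on {0..1} q"
    and q_mono: "mono_on {0..1} q"
    and q0: "q 0 = 0" and q1: "q 1 = 1"
    and q_deriv: "\<forall>u\<in>{0..1}. (q has_real_derivative q' u) (at u within {0..1})"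
    and FT_def: "FT = (\<lambda>x. q (F x))"
    and fT_def: "fT = (\<lambda>x. q' (F x) * f x)"
    and T_distr: "distributed M lborel T (\<lambda>x. ennreal (fT x))"
    and T_cdf: "\<forall>x. measure M {\<omega> \<in> space M. T \<omega> \<le> x} = FT x"
    and \<alpha>_pos: "0 < \<alpha>" and \<alpha>_ne1: "\<alpha> \<noteq> 1" and \<beta>_pos: "0 < \<beta>"
    and int_f: "set_integrable lborel {0..} (\<lambda>x. f x powr \<alpha>)"
    and int_fT: "set_integrable lborel {0..} (\<lambda>x. fT x powr \<alpha>)"
  shows
    "((\<forall>u\<in>{0..1}. fT (quantile FT (q u)) powr \<alpha> \<ge> f (quantile F u) powr \<alpha>) \<longrightarrow>
        ((((\<alpha> > 1 \<and> \<beta> \<le> 1) \<or> (\<alpha> < 1 \<and> \<beta> \<ge> 1)) \<longrightarrow> renyi_igf \<alpha> \<beta> fT \<ge> renyi_igf \<alpha> \<beta> f) \<and>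
         (((\<alpha> > 1 \<and> \<beta> \<ge> 1) \<or> (\<alpha> < 1 \<and> \<beta> \<le> 1)) \<longrightarrow> renyi_igf \<alpha> \<beta> fT \<le> renyi_igf \<alpha> \<beta> f)))
     \<and>
     ((\<forall>u\<in>{0..1}. fT (quantile FT (q u)) powr \<alpha> \<le> f (quantile F u) powr \<alpha>) \<longrightarrow>
        ((((\<alpha> > 1 \<and> \<beta> \<le> 1) \<or> (\<alpha> < 1 \<and> \<beta> \<ge> 1)) \<longrightarrow> renyi_igf \<alpha> \<beta> fT \<le> renyi_igf \<alpha> \<beta> f) \<and>
         (((\<alpha> > 1 \<and> \<beta> \<ge> 1) \<or> (\<alpha> < 1 \<and> \<beta> \<le> 1)) \<longrightarrow> renyi_igf \<alpha> \<beta> fT \<ge> renyi_igf \<alpha> \<beta> f)))"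
proof -
  note cbX = cdf_basic[OF M X_distr F_cdf]
  have T_cdf': "\<forall>x. FT x = measure M {\<omega> \<in> space M. T \<omega> \<le> x}" using T_cdf by simp
  note cbT = cdf_basic[OF M T_distr T_cdf']
  have fm: "(\<lambda>x. ennreal (f x)) \<in> borel_measurable lborel"
    using X_distr by (simp add: distributed_borel_measurable)
  have fTm0: "(\<lambda>x. ennreal (fT x)) \<in> borel_measurable lborel"
    using T_distr by (simp add: distributed_borel_measurable)
  have fTm: "(\<lambda>x. ennreal (q' (F x) * f x)) \<in> borel_measurable lborel"
    using fTm0 unfolding fT_def .
  have Fc: "continuous_on UNIV F" by (rule cbX(3))
  have F_eq: "F = cdf (density lborel (\<lambda>x. ennreal (f x)))" by (rule cbX(2))
  have FTc: "continuous_on UNIV (\<lambda>y. q (F y))" using cbT(3) unfolding FT_def .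
  have rdT': "real_distribution (density lborel (\<lambda>x. ennreal (q' (F x) * f x)))"
    using cbT(1) unfolding fT_def .
  have FT': "cdf (density lborel (\<lambda>x. ennreal (q' (F x) * f x))) = (\<lambda>x. q (F x))"
    using cbT(2) unfolding fT_def FT_def by simp
  note cX = cdf_more[OF cbX(1)] and cT = cdf_more[OF rdT']
  have Fm: "mono F" using cX(1) F_eq by simp
  have Fl: "(F \<longlongrightarrow> 0) at_bot" using cX(2) F_eq by simp
  have Fr: "\<And>x. 0 \<le> F x \<and> F x \<le> 1" using cX(4,5) F_eq by simp
  have FTl: "((\<lambda>y. q (F y)) \<longlongrightarrow> 0) at_bot" using cT(2) FT' by simp
  have qd': "0 \<le> q' u" if "u \<in> {0..1}" for u
    using deriv_nonneg[OF q_deriv[rule_format, OF that] _ _ q_mono] that by auto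
  have fTnn: "0 \<le> fT x" for x
    using qd'[of "F x"] Fr[of x] f_nonneg unfolding fT_def by auto
  have goodAE: "AE x in lborel. 0 < f x \<longrightarrow> quantile F (F x) = x"
    by (rule good_ae[OF M X_distr F_cdf])
  have Xm: "X \<in> borel_measurable M"
    using distributed_measurable[OF X_distr] by simp
  have F0: "F 0 = 0" by (rule F_zero[OF M Xm X_nonneg F_cdf Fc])
  have Apos: "0 < (LBINT x:{0..}. f x powr \<alpha>)"
    by (rule pos_int[OF cbX(1) fm _ int_f]) (use F0 F_eq in simp)
  have Bpos: "0 < (LBINT x:{0..}. fT x powr \<alpha>)"
    by (rule pos_int[OF cbT(1) fTm0 _ int_fT]) (metis cbT(2) FT_def F0 q0)
  let ?A = "LBINT x:{0..}. f x powr \<alpha>" and ?B = "LBINT x:{0..}. fT x powr \<alpha>"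
  have RA: "renyi_igf \<alpha> \<beta> f = (1 / (1 - \<alpha>)) * ?A powr (\<beta> - 1)" by (simp add: renyi_igf_def)
  have RB: "renyi_igf \<alpha> \<beta> fT = (1 / (1 - \<alpha>)) * ?B powr (\<beta> - 1)" by (simp add: renyi_igf_def)
  show ?thesis
  proof (rule conjI; rule impI)
    assume hge: "\<forall>u\<in>{0..1}. fT (quantile FT (q u)) powr \<alpha> \<ge> f (quantile F u) powr \<alpha>"
    have hyp: "\<forall>u\<in>{0..1}. (\<lambda>x. q' (F x) * f x) (quantile (\<lambda>y. q (F y)) (q u)) powr \<alpha> \<ge> f (quantile F u) powr \<alpha>"
      using hge unfolding FT_def fT_def by simp
    have Bz: "\<forall>u\<in>{0<..1}. 0 < q u"
      by (rule Bzero[OF cbX(1) rdT' refl refl fm fTm F_eq FT' Fc FTc f_nonneg q_range q_cont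
            q_mono q0 q1 q_deriv hyp \<alpha>_pos goodAE])
    have ae: "AE x in lborel. f x powr \<alpha> \<le> fT x powr \<alpha>"
      using goodAE
    proof eventually_elim
      case (elim x)
      show ?case
      proof (cases "0 < f x")
        case True
        then have gx: "quantile F (F x) = x" using elim by simp
        have "F x = 0 \<or> 0 < q (F x)" using Bz Fr[of x] by force
        then show ?thesis
          using ge_point[OF Fc Fl Fm Fr FTc FTl q_mono q0 q_range q_deriv hyp \<alpha>_pos gx True]
          unfolding fT_def by simp
      next
        case False
        then have "f x = 0" using f_nonneg by (metis less_eq_real_def)
        then show ?thesis by simp
      qed
    qed
    have AB: "?A \<le> ?B"
      by (rule set_integral_mono_AE[OF int_f int_fT]) (use ae in \<open>auto elim: AE_mp\<close>)
    note al = alg[OF Apos AB \<alpha>_pos \<alpha>_ne1 \<beta>_pos]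
    show "(((\<alpha> > 1 \<and> \<beta> \<le> 1) \<or> (\<alpha> < 1 \<and> \<beta> \<ge> 1)) \<longrightarrow> renyi_igf \<alpha> \<beta> fT \<ge> renyi_igf \<alpha> \<beta> f) \<and>
      (((\<alpha> > 1 \<and> \<beta> \<ge> 1) \<or> (\<alpha> < 1 \<and> \<beta> \<le> 1)) \<longrightarrow> renyi_igf \<alpha> \<beta> fT \<le> renyi_igf \<alpha> \<beta> f)"
      using al unfolding RA RB by blast
  next
    assume hle: "\<forall>u\<in>{0..1}. fT (quantile FT (q u)) powr \<alpha> \<le> f (quantile F u) powr \<alpha>"
    have hyp: "\<forall>u\<in>{0..1}. (\<lambda>x. q' (F x) * f x) (quantile (\<lambda>y. q (F y)) (q u)) powr \<alpha> \<le> f (quantile F u) powr \<alpha>"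
      using hle unfolding FT_def fT_def by simp
    have ae: "AE x in lborel. fT x powr \<alpha> \<le> f x powr \<alpha>"
      using goodAE
    proof eventually_elim
      case (elim x)
      show ?case
      proof (cases "0 < f x \<and> q' (F x) \<noteq> 0")
        case True
        then have gx: "quantile F (F x) = x" using elim by simp
        show ?thesis
          using le_point[OF Fc Fl Fm Fr FTc FTl q_mono q0 q_range q_deriv hyp gx] True
          unfolding fT_def by simp
      next
        case False
        then have "fT x = 0" using f_nonneg unfolding fT_def by (metis less_eq_real_def mult_eq_0_iff)
        then show ?thesis by simp
      qed
    qed
    have BA: "?B \<le> ?A"
      by (rule set_integral_mono_AE[OF int_fT int_f]) (use ae in \<open>auto elim: AE_mp\<close>)
    note al = alg[OF Bpos BA \<alpha>_pos \<alpha>_ne1 \<beta>_pos]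
    show "(((\<alpha> > 1 \<and> \<beta> \<le> 1) \<or> (\<alpha> < 1 \<and> \<beta> \<ge> 1)) \<longrightarrow> renyi_igf \<alpha> \<beta> fT \<le> renyi_igf \<alpha> \<beta> f) \<and>
      (((\<alpha> > 1 \<and> \<beta> \<ge> 1) \<or> (\<alpha> < 1 \<and> \<beta> \<le> 1)) \<longrightarrow> renyi_igf \<alpha> \<beta> fT \<ge> renyi_igf \<alpha> \<beta> f)"
      using al unfolding RA RB by blast
  qed
qed

end
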